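(* Let $C$ be a real $k\times l$ matrix with all entries nonnegative and no column consisting entirely of zeros, and let $A$ be the real symmetric $(k+1+l)\times(k+1+l)$ block matrix $$A=\begin{pmatrix}\mathbf 0_{k\times k}&\mathbf 0_{k\times 1}&C\\ \mathbf 0_{1\times k}&0&\mathbf 0_{1\times l}\\ C^{T}&\mathbf 0_{l\times 1}&\mathbf 0_{l\times l}\end{pmatrix}.$$ If $A$ has symmetric tropical rank two, then $A$ has symmetric Kapranov rank two.
   Context: Let $\tilde K$ be the field of Hahn series $\sum_{\alpha\in A}c_\alpha t^\alpha$ ($A\subset\mathbb R$ well-ordered, $c_\alpha\in\mathbb C$); for nonzero $a\in\tilde K$, $\deg(a)$ is the smallest exponent with nonzero coefficient. A symmetric lift of a real symmetric matrix $A$ is a symmetric matrix $\tilde A$ over $\tilde K$ with all entries nonzero and $\deg(\tilde a_{i,j})=A_{i,j}$; the symmetric Kapranov rank of $A$ is the minimum rank of a symmetric lift. For an $r\times r$ submatrix of $A$ with row index set $I$ and column index set $J$, each bijection $\rho:I\to J$ gives a monomial $\prod_{i\in I}X_{i,\rho(i)}$ in commuting variables subject to $X_{i,j}=X_{j,i}$, with value $\sum_{i\in I}A_{i,\rho(i)}$; the submatrix is symmetrically tropically singular if the minimum value is attained by at least two distinct monomials. The symmetric tropical rank of $A$ is the largest $r$ such that $A$ has an $r\times r$ submatrix that is not symmetrically tropically singular. *)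

theory Defs
  imports Complex_Main "HOL-Library.Multiset"
begin

definition is_hahn :: "(real \<Rightarrow> complex) \<Rightarrow> bool" where
  "is_hahn f \<longleftrightarrow> (\<forall>B \<subseteq> {a. f a \<noteq> 0}. B \<noteq> {} \<longrightarrow> (\<exists>m\<in>B. \<forall>b\<in>B. m \<le> b))"

definition hzero :: "real \<Rightarrow> complex" where
  "hzero = (\<lambda>_. 0)"

definition hdeg :: "(real \<Rightarrow> complex) \<Rightarrow> real" where
  "hdeg f = (THE m. f m \<noteq> 0 \<and> (\<forall>b. f b \<noteq> 0 \<longrightarrow> m \<le> b))"

text \<open>Product of Hahn series (Cauchy product; the index set is finite for Hahn series).
  Addition is pointwise.\<close>
definition hmul :: "(real \<Rightarrow> complex) \<Rightarrow> (real \<Rightarrow> complex) \<Rightarrow> (real \<Rightarrow> complex)" where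
  "hmul f g = (\<lambda>c. \<Sum>p \<in> {(a, b). a + b = c \<and> f a \<noteq> 0 \<and> g b \<noteq> 0}. f (fst p) * g (snd p))"

text \<open>An n x n matrix M over the Hahn series field has rank at most r iff it is
  a sum of r rank-one matrices, i.e. M = U V with U of size n x r, V of size r x n.\<close>
definition hrank_le :: "(nat \<Rightarrow> nat \<Rightarrow> (real \<Rightarrow> complex)) \<Rightarrow> nat \<Rightarrow> nat \<Rightarrow> bool" where
  "hrank_le M n r \<longleftrightarrow> (\<exists>u v. (\<forall>i s. is_hahn (u i s) \<and> is_hahn (v s i)) \<and>
      (\<forall>i<n. \<forall>j<n. M i j = (\<lambda>c. \<Sum>s<r. hmul (u i s) (v s j) c)))"

definition sym_lift :: "(nat \<Rightarrow> nat \<Rightarrow> real) \<Rightarrow> nat \<Rightarrow> (nat \<Rightarrow> nat \<Rightarrow> (real \<Rightarrow> complex)) \<Rightarrow> bool" where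
  "sym_lift A n M \<longleftrightarrow> (\<forall>i<n. \<forall>j<n. is_hahn (M i j) \<and> M i j \<noteq> hzero \<and>
      hdeg (M i j) = A i j \<and> M i j = M j i)"

definition sym_kapranov_rank :: "(nat \<Rightarrow> nat \<Rightarrow> real) \<Rightarrow> nat \<Rightarrow> nat" where
  "sym_kapranov_rank A n = (LEAST r. \<exists>M. sym_lift A n M \<and> hrank_le M n r)"

text \<open>Monomial of a bijection rho : I -> J, in commuting variables with X_ij = X_ji:
  a multiset of unordered index pairs (normalised as (min, max)).\<close>
definition sym_monomial :: "nat set \<Rightarrow> (nat \<Rightarrow> nat) \<Rightarrow> (nat \<times> nat) multiset" where
  "sym_monomial I \<rho> = image_mset (\<lambda>i. (min i (\<rho> i), max i (\<rho> i))) (mset_set I)"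

definition trop_val :: "(nat \<Rightarrow> nat \<Rightarrow> real) \<Rightarrow> nat set \<Rightarrow> (nat \<Rightarrow> nat) \<Rightarrow> real" where
  "trop_val A I \<rho> = (\<Sum>i\<in>I. A i (\<rho> i))"

definition sym_trop_singular :: "(nat \<Rightarrow> nat \<Rightarrow> real) \<Rightarrow> nat set \<Rightarrow> nat set \<Rightarrow> bool" where
  "sym_trop_singular A I J \<longleftrightarrow> (\<exists>\<rho>1 \<rho>2. bij_betw \<rho>1 I J \<and> bij_betw \<rho>2 I J \<and>
      sym_monomial I \<rho>1 \<noteq> sym_monomial I \<rho>2 \<and>
      (\<forall>\<rho>. bij_betw \<rho> I J \<longrightarrow> trop_val A I \<rho>1 \<le> trop_val A I \<rho> \<and> trop_val A I \<rho>2 \<le> trop_val A I \<rho>))"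

definition sym_trop_rank :: "(nat \<Rightarrow> nat \<Rightarrow> real) \<Rightarrow> nat \<Rightarrow> nat" where
  "sym_trop_rank A n = Max {r. \<exists>I J. I \<subseteq> {..<n} \<and> J \<subseteq> {..<n} \<and> card I = r \<and> card J = r \<and>
      \<not> sym_trop_singular A I J}"

text \<open>Indices 0..k-1, k, k+1..k+l; C is k x l (indices i<k, j<l).\<close>
definition block_matrix :: "nat \<Rightarrow> (nat \<Rightarrow> nat \<Rightarrow> real) \<Rightarrow> nat \<Rightarrow> nat \<Rightarrow> real" where
  "block_matrix k C i j =
     (if i < k \<and> k + 1 \<le> j then C i (j - (k + 1))
      else if k + 1 \<le> i \<and> j < k then C j (i - (k + 1))
      else 0)"

end

theory Submission
  imports Defs
begin


lemma finite_supp_hahn: "finite {a. f a \<noteq> 0} \<Longrightarrow> is_hahn f"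
  unfolding is_hahn_def
proof (intro allI impI)
  fix B assume fin: "finite {a. f a \<noteq> 0}" and B: "B \<subseteq> {a. f a \<noteq> 0}" "B \<noteq> {}"
  then have "finite B" using finite_subset by blast
  then show "\<exists>m\<in>B. \<forall>b\<in>B. m \<le> b" using B(2) by (metis Min_in Min_le)
qed

lemma hdeg_eq: assumes "f m \<noteq> 0" "\<forall>b<m. f b = 0" shows "hdeg f = m"
  unfolding hdeg_def
proof (rule the_equality)
  show "f m \<noteq> 0 \<and> (\<forall>b. f b \<noteq> 0 \<longrightarrow> m \<le> b)" using assms by (meson not_le)
next
  fix m' assume "f m' \<noteq> 0 \<and> (\<forall>b. f b \<noteq> 0 \<longrightarrow> m' \<le> b)"
  then show "m' = m" using assms by (meson antisym not_le)
qed

lemma hdeg_prop: assumes "is_hahn f" "f \<noteq> hzero"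
  shows "f (hdeg f) \<noteq> 0 \<and> (\<forall>b. f b \<noteq> 0 \<longrightarrow> hdeg f \<le> b)"
proof -
  have "{a. f a \<noteq> 0} \<noteq> {}" using assms(2) unfolding hzero_def by auto
  then obtain m where m: "f m \<noteq> 0" "\<forall>b. f b \<noteq> 0 \<longrightarrow> m \<le> b"
    using assms(1) unfolding is_hahn_def by (metis (mono_tags, lifting) mem_Collect_eq subset_refl)
  then have "hdeg f = m" by (intro hdeg_eq) (auto simp: not_le[symmetric])
  then show ?thesis using m by simp
qed

lemma hmul_zero_left: "hmul hzero g = hzero"
  unfolding hmul_def hzero_def by simp

lemma hmul_zero_right: "hmul f hzero = hzero"
  unfolding hmul_def hzero_def by simp

lemma hmul_deg: assumes "is_hahn f" "is_hahn g" "f \<noteq> hzero" "g \<noteq> hzero"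
  shows "hmul f g \<noteq> hzero \<and> hdeg (hmul f g) = hdeg f + hdeg g"
proof -
  define a0 where "a0 = hdeg f"
  define b0 where "b0 = hdeg g"
  have f: "f a0 \<noteq> 0" "\<And>b. f b \<noteq> 0 \<Longrightarrow> a0 \<le> b" using hdeg_prop[OF assms(1,3)] a0_def by auto
  have g: "g b0 \<noteq> 0" "\<And>b. g b \<noteq> 0 \<Longrightarrow> b0 \<le> b" using hdeg_prop[OF assms(2,4)] b0_def by auto
  have S: "{(a, b). a + b = a0 + b0 \<and> f a \<noteq> 0 \<and> g b \<noteq> 0} = {(a0, b0)}"
  proof (safe)
    fix a b assume "a + b = a0 + b0" "f a \<noteq> 0" "g b \<noteq> 0"
    with f(2)[of a] g(2)[of b] show "a = a0" "b = b0" by auto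
  qed (use f g in auto)
  have v: "hmul f g (a0 + b0) = f a0 * g b0" unfolding hmul_def S by simp
  have z: "hmul f g c = 0" if "c < a0 + b0" for c
  proof -
    have e: "{(a, b). a + b = c \<and> f a \<noteq> 0 \<and> g b \<noteq> 0} = {}"
      using f(2) g(2) that by fastforce
    show ?thesis unfolding hmul_def e by simp
  qed
  have nz: "hmul f g (a0 + b0) \<noteq> 0" using v f(1) g(1) by simp
  then have "hmul f g \<noteq> hzero" unfolding hzero_def by auto
  moreover have "hdeg (hmul f g) = a0 + b0" using nz z by (intro hdeg_eq) auto
  ultimately show ?thesis unfolding a0_def b0_def by simp
qed

definition hone :: "real \<Rightarrow> complex" where "hone = (\<lambda>c. if c = 0 then 1 else 0)"

lemma hmul_one_left: "hmul hone g = g"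
proof
  fix c
  have "{(a, b). a + b = c \<and> hone a \<noteq> 0 \<and> g b \<noteq> 0} = (if g c = 0 then {} else {(0, c)})"
    unfolding hone_def by (auto split: if_splits)
  then show "hmul hone g c = g c" unfolding hmul_def by (simp add: hone_def)
qed

lemma hmul_one_right: "hmul f hone = f"
proof
  fix c
  have "{(a, b). a + b = c \<and> f a \<noteq> 0 \<and> hone b \<noteq> 0} = (if f c = 0 then {} else {(c, 0)})"
    unfolding hone_def by (auto split: if_splits)
  then show "hmul f hone c = f c" unfolding hmul_def by (simp add: hone_def)
qed


lemma bm_sym: "block_matrix k C x y = block_matrix k C y x"
  unfolding block_matrix_def by auto

lemma bm_low: "x \<le> k \<Longrightarrow> y \<le> k \<Longrightarrow> block_matrix k C x y = 0"
  unfolding block_matrix_def by auto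

lemma bm_high: "k < x \<Longrightarrow> k < y \<Longrightarrow> block_matrix k C x y = 0"
  unfolding block_matrix_def by auto

lemma bm_kk: "block_matrix k C k y = 0"
  unfolding block_matrix_def by auto

lemma bm_cross: "i < k \<Longrightarrow> block_matrix k C i (k + 1 + m) = C i m"
  unfolding block_matrix_def by auto

lemma bm_cross': "i < k \<Longrightarrow> block_matrix k C (k + 1 + m) i = C i m"
  unfolding block_matrix_def by auto

definition reachv :: "(nat \<Rightarrow> nat \<Rightarrow> real) \<Rightarrow> nat \<Rightarrow> real \<Rightarrow> nat \<Rightarrow> nat \<Rightarrow> bool" where
  "reachv A n v = (\<lambda>a b. a < n \<and> b < n \<and> v < A a b)\<^sup>*\<^sup>*"

definition codev :: "(nat \<Rightarrow> nat \<Rightarrow> real) \<Rightarrow> nat \<Rightarrow> real \<Rightarrow> nat \<Rightarrow> nat" where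
  "codev A n v x = (LEAST z. reachv A n v x z)"

lemma rtranclp_sym:
  assumes "r\<^sup>*\<^sup>* x y" "\<And>a b. r a b \<Longrightarrow> r b a" shows "r\<^sup>*\<^sup>* y x"
  using assms(1)
proof (induction rule: rtranclp_induct)
  case base then show ?case by simp
next
  case (step y z)
  then show ?case using assms(2) by (meson converse_rtranclp_into_rtranclp)
qed

lemma reach_sym:
  assumes "\<And>x y. A x y = A y x" "reachv A n v a b" shows "reachv A n v b a"
  using assms(2) unfolding reachv_def by (rule rtranclp_sym) (use assms(1) in auto)

lemma reach_trans: "reachv A n v a b \<Longrightarrow> reachv A n v b c \<Longrightarrow> reachv A n v a c"
  unfolding reachv_def by simp

lemma reach_refl: "reachv A n v a a"
  unfolding reachv_def by simp

lemma reach_edge: "a < n \<Longrightarrow> b < n \<Longrightarrow> v < A a b \<Longrightarrow> reachv A n v a b"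
  unfolding reachv_def by (simp add: r_into_rtranclp)

lemma code_eq:
  assumes "\<And>x y. A x y = A y x" "reachv A n v x y" shows "codev A n v x = codev A n v y"
proof -
  have s: "reachv A n v y x" by (rule reach_sym[OF assms])
  have "reachv A n v x z = reachv A n v y z" for z
    using reach_trans[OF s, of z] reach_trans[OF assms(2), of z] by blast
  then have "reachv A n v x = reachv A n v y" by (rule ext)
  then show ?thesis unfolding codev_def by simp
qed

lemma code_neq:
  assumes "\<And>x y. A x y = A y x" "\<not> reachv A n v x y" shows "codev A n v x \<noteq> codev A n v y"
proof
  assume e: "codev A n v x = codev A n v y"
  have "reachv A n v x (codev A n v x)" unfolding codev_def by (rule LeastI[of _ x]) (rule reach_refl)
  moreover have "reachv A n v y (codev A n v y)" unfolding codev_def by (rule LeastI[of _ y]) (rule reach_refl)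
  ultimately have "reachv A n v x (codev A n v x)" "reachv A n v (codev A n v x) y"
    using e reach_sym[OF assms(1)] by auto
  then show False using assms(2) reach_trans by blast
qed

lemma reach_inv:
  assumes fp: "\<And>a z b c. a < n \<Longrightarrow> z < n \<Longrightarrow> b < n \<Longrightarrow> c < n \<Longrightarrow> v < A a z \<Longrightarrow> v < A z b
      \<Longrightarrow> v < A b c \<Longrightarrow> a \<noteq> c \<Longrightarrow> v < A a c"
    and r: "reachv A n v a b" and an: "a < n"
  shows "a = b \<or> v < A a b \<or> (\<exists>z<n. v < A a z \<and> v < A z b)"
  using r unfolding reachv_def
proof (induction rule: rtranclp_induct)
  case base then show ?case by simp
next
  case (step b c)
  from step.IH show ?case
  proof (elim disjE exE conjE)
    assume "a = b" then show ?case using step.hyps(2) by auto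
  next
    assume "v < A a b" then show ?case using step.hyps(2) by auto
  next
    fix z assume "z < n" "v < A a z" "v < A z b"
    then have "a = c \<or> v < A a c" using fp[of a z b c] an step.hyps(2) by blast
    then show ?case by auto
  qed
qed


definition levels :: "(nat \<Rightarrow> nat \<Rightarrow> real) \<Rightarrow> nat \<Rightarrow> real set" where
  "levels A n = (\<lambda>p. A (fst p) (snd p)) ` ({..<n} \<times> {..<n})"

definition ser :: "(nat \<Rightarrow> nat \<Rightarrow> real) \<Rightarrow> nat \<Rightarrow> nat \<Rightarrow> real \<Rightarrow> complex" where
  "ser A n x = (\<lambda>c. if c \<in> levels A n then of_nat (codev A n c x + 1) else 0)"

definition sg :: "nat \<Rightarrow> nat \<Rightarrow> complex" where
  "sg k x = (if x \<le> k then 1 else -1)"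

definition MM :: "(nat \<Rightarrow> nat \<Rightarrow> real) \<Rightarrow> nat \<Rightarrow> nat \<Rightarrow> nat \<Rightarrow> nat \<Rightarrow> real \<Rightarrow> complex" where
  "MM A n k x y = (\<lambda>c. sg k x * ser A n x c + sg k y * ser A n y c)"

lemma finite_levels: "finite (levels A n)"
  unfolding levels_def by simp

lemma hahn_ser: "is_hahn (\<lambda>c. sg k x * ser A n x c)"
proof (rule finite_supp_hahn)
  have "{c. sg k x * ser A n x c \<noteq> 0} \<subseteq> levels A n" unfolding ser_def by auto
  then show "finite {c. sg k x * ser A n x c \<noteq> 0}" using finite_levels finite_subset by blast
qed

lemma hahn_MM: "is_hahn (MM A n k x y)"
proof (rule finite_supp_hahn)
  have "{c. MM A n k x y c \<noteq> 0} \<subseteq> levels A n" unfolding MM_def ser_def by auto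
  then show "finite {c. MM A n k x y c \<noteq> 0}" using finite_levels finite_subset by blast
qed

lemma hahn_hone: "is_hahn hone"
  by (rule finite_supp_hahn) (simp add: hone_def)

lemma MM_sym: "MM A n k x y = MM A n k y x"
  unfolding MM_def by (simp add: add.commute)

lemma of_nat_sum_nz: "(of_nat (a + 1) :: complex) + of_nat (b + 1) \<noteq> 0"
proof -
  have "(of_nat (a + 1) :: complex) + of_nat (b + 1) = of_nat (Suc (a + b + 1))" by simp
  then show ?thesis by (metis of_nat_neq_0)
qed

context
  fixes k l :: nat and C :: "nat \<Rightarrow> nat \<Rightarrow> real"
  assumes nonneg: "\<forall>i<k. \<forall>j<l. C i j \<ge> 0"
begin

lemma bm_nonneg: "x < k + 1 + l \<Longrightarrow> y < k + 1 + l \<Longrightarrow> 0 \<le> block_matrix k C x y"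
  unfolding block_matrix_def using nonneg by auto

lemma sides: "0 \<le> v \<Longrightarrow> v < block_matrix k C x y \<Longrightarrow> (x < k \<and> k < y) \<or> (k < x \<and> y < k)"
proof -
  assume v: "0 \<le> v" and e: "v < block_matrix k C x y"
  have 1: "x \<le> k \<Longrightarrow> y \<le> k \<Longrightarrow> False" using bm_low[of x k y C] e v by simp
  have 2: "k < x \<Longrightarrow> k < y \<Longrightarrow> False" using bm_high[of k x y C] e v by simp
  have 3: "x \<noteq> k" using bm_kk[of k C y] e v by auto
  have 4: "y \<noteq> k" using bm_kk[of k C x] bm_sym[of k C x y] e v by auto
  show ?thesis by (cases "x < k"; cases "y < k") (use 1 2 3 4 in auto)
qed

lemma fourpt_row:
  assumes fp: "\<forall>i i' m m'. i < k \<longrightarrow> i' < k \<longrightarrow> m < l \<longrightarrow> m' < l \<longrightarrow> i \<noteq> i' \<longrightarrow> m \<noteq> m' \<longrightarrow>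
      \<not> (C i m < C i m' \<and> C i m < C i' m \<and> C i m < C i' m')"
    and a: "a < k" and n: "z < k + 1 + l" "b < k + 1 + l" "c < k + 1 + l" and v: "0 \<le> v"
    and e: "v < block_matrix k C a z" "v < block_matrix k C z b" "v < block_matrix k C b c"
  shows "v < block_matrix k C a c"
proof -
  have z: "k < z" using sides[OF v e(1)] a by auto
  have b: "b < k" using sides[OF v e(2)] z by auto
  have c: "k < c" using sides[OF v e(3)] b by auto
  define m' where "m' = z - (k + 1)"
  have m': "z = k + 1 + m'" "m' < l" using z n(1) unfolding m'_def by auto
  define m where "m = c - (k + 1)"
  have m: "c = k + 1 + m" "m < l" using c n(3) unfolding m_def by auto
  show ?thesis
  proof (cases "a = b \<or> m = m'")
    case True
    then show ?thesis using e m m' by auto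
  next
    case False
    have e': "v < C a m'" "v < C b m'" "v < C b m"
      using e m m' a b bm_cross[of a k C m'] bm_cross'[of b k C m'] bm_cross[of b k C m] by auto
    have "\<not> (C a m < C a m' \<and> C a m < C b m \<and> C a m < C b m')"
      using fp a b m m' False by blast
    then have "v < C a m" using e' by linarith
    then show ?thesis using m bm_cross[OF a] by simp
  qed
qed

lemma fourpt:
  assumes fp: "\<forall>i i' m m'. i < k \<longrightarrow> i' < k \<longrightarrow> m < l \<longrightarrow> m' < l \<longrightarrow> i \<noteq> i' \<longrightarrow> m \<noteq> m' \<longrightarrow>
      \<not> (C i m < C i m' \<and> C i m < C i' m \<and> C i m < C i' m')"
    and n: "a < k + 1 + l" "z < k + 1 + l" "b < k + 1 + l" "c < k + 1 + l" and v: "0 \<le> v"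
    and e: "v < block_matrix k C a z" "v < block_matrix k C z b" "v < block_matrix k C b c"
  shows "v < block_matrix k C a c"
proof (cases "a < k")
  case True
  then show ?thesis using fourpt_row[OF fp True n(2-4) v e] by simp
next
  case False
  then have "k < z \<and> b < k \<or> z < k" using sides[OF v e(1)] by auto
  have z: "z < k" using sides[OF v e(1)] False by auto
  have b: "k < b" using sides[OF v e(2)] z by auto
  have c: "c < k" using sides[OF v e(3)] b by auto
  have s: "block_matrix k C c b = block_matrix k C b c" "block_matrix k C b z = block_matrix k C z b"
    "block_matrix k C z a = block_matrix k C a z" "block_matrix k C c a = block_matrix k C a c"
    by (rule bm_sym)+
  have "v < block_matrix k C c a"
    by (rule fourpt_row[OF fp c n(3) n(2) n(1) v]) (use e s in simp_all)
  then show ?thesis using s by simp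
qed

lemma not_reach:
  assumes fp: "\<forall>i i' m m'. i < k \<longrightarrow> i' < k \<longrightarrow> m < l \<longrightarrow> m' < l \<longrightarrow> i \<noteq> i' \<longrightarrow> m \<noteq> m' \<longrightarrow>
      \<not> (C i m < C i m' \<and> C i m < C i' m \<and> C i m < C i' m')"
    and xy: "x \<le> k" "k < y" "y < k + 1 + l"
  shows "\<not> reachv (block_matrix k C) (k + 1 + l) (block_matrix k C x y) x y"
proof
  define v where "v = block_matrix k C x y"
  have v: "0 \<le> v" unfolding v_def using xy by (intro bm_nonneg) auto
  assume "reachv (block_matrix k C) (k + 1 + l) (block_matrix k C x y) x y"
  then have r: "reachv (block_matrix k C) (k + 1 + l) v x y" unfolding v_def .
  have inv: "x = y \<or> v < block_matrix k C x y \<or> (\<exists>z<k+1+l. v < block_matrix k C x z \<and> v < block_matrix k C z y)"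
  proof (rule reach_inv[OF _ r])
    fix a z b c assume h: "a < k + 1 + l" "z < k + 1 + l" "b < k + 1 + l" "c < k + 1 + l"
      "v < block_matrix k C a z" "v < block_matrix k C z b" "v < block_matrix k C b c" "a \<noteq> c"
    show "v < block_matrix k C a c" by (rule fourpt[OF fp h(1-4) v h(5-7)])
  next
    show "x < k + 1 + l" using xy by simp
  qed
  have "x \<noteq> y" using xy by auto
  moreover have "\<not> v < block_matrix k C x y" unfolding v_def by simp
  ultimately obtain z where z: "v < block_matrix k C x z" "v < block_matrix k C z y"
    using inv by blast
  have "x < k \<and> k < z" using sides[OF v z(1)] xy(1) by auto
  then show False using sides[OF v z(2)] xy by auto
qed

lemma lev_nonneg: "c \<in> levels (block_matrix k C) (k + 1 + l) \<Longrightarrow> 0 \<le> c"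
  unfolding levels_def using bm_nonneg by auto

lemma zero_lev: "0 \<in> levels (block_matrix k C) (k + 1 + l)"
proof -
  have "block_matrix k C k k = 0" by (rule bm_kk)
  then show ?thesis unfolding levels_def by (force intro!: image_eqI[where x="(k,k)"])
qed

lemma lev_in: "x < k + 1 + l \<Longrightarrow> y < k + 1 + l \<Longrightarrow> block_matrix k C x y \<in> levels (block_matrix k C) (k + 1 + l)"
  unfolding levels_def by (force intro!: image_eqI[where x="(x,y)"])

lemma deg_low:
  assumes "x \<le> k" "y \<le> k"
  shows "MM (block_matrix k C) (k + 1 + l) k x y \<noteq> hzero \<and> hdeg (MM (block_matrix k C) (k + 1 + l) k x y) = block_matrix k C x y"
proof -
  let ?M = "MM (block_matrix k C) (k + 1 + l) k x y"
  have a: "block_matrix k C x y = 0" using bm_low assms by simp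
  have "?M 0 \<noteq> 0" using zero_lev assms of_nat_sum_nz unfolding MM_def ser_def sg_def by simp
  moreover have "\<forall>b<0. ?M b = 0" using lev_nonneg unfolding MM_def ser_def by force
  ultimately show ?thesis using a hdeg_eq[of ?M 0] unfolding hzero_def by auto
qed

lemma deg_high:
  assumes "k < x" "k < y"
  shows "MM (block_matrix k C) (k + 1 + l) k x y \<noteq> hzero \<and> hdeg (MM (block_matrix k C) (k + 1 + l) k x y) = block_matrix k C x y"
proof -
  let ?M = "MM (block_matrix k C) (k + 1 + l) k x y"
  have a: "block_matrix k C x y = 0" using bm_high assms by simp
  have "?M 0 = - (of_nat (codev (block_matrix k C) (k + 1 + l) 0 x + 1) + of_nat (codev (block_matrix k C) (k + 1 + l) 0 y + 1))"
    using zero_lev assms unfolding MM_def ser_def sg_def by simp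
  then have "?M 0 \<noteq> 0" by (metis neg_equal_0_iff_equal of_nat_sum_nz)
  moreover have "\<forall>b<0. ?M b = 0" using lev_nonneg unfolding MM_def ser_def by force
  ultimately show ?thesis using a hdeg_eq[of ?M 0] unfolding hzero_def by auto
qed

lemma deg_cross:
  assumes fp: "\<forall>i i' m m'. i < k \<longrightarrow> i' < k \<longrightarrow> m < l \<longrightarrow> m' < l \<longrightarrow> i \<noteq> i' \<longrightarrow> m \<noteq> m' \<longrightarrow>
      \<not> (C i m < C i m' \<and> C i m < C i' m \<and> C i m < C i' m')"
    and xy: "x \<le> k" "k < y" "y < k + 1 + l"
  shows "MM (block_matrix k C) (k + 1 + l) k x y \<noteq> hzero \<and> hdeg (MM (block_matrix k C) (k + 1 + l) k x y) = block_matrix k C x y"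
proof -
  let ?A = "block_matrix k C" and ?n = "k + 1 + l"
  let ?M = "MM ?A ?n k x y"
  define d where "d = ?A x y"
  have sym: "\<And>x y. ?A x y = ?A y x" by (rule bm_sym)
  have xn: "x < ?n" using xy by simp
  have M: "?M c = of_nat (codev ?A ?n c x + 1) - of_nat (codev ?A ?n c y + 1)" if "c \<in> levels ?A ?n" for c
    using that xy unfolding MM_def ser_def sg_def by simp
  have M0: "?M c = 0" if "c \<notin> levels ?A ?n" for c
    using that unfolding MM_def ser_def by simp
  have "codev ?A ?n d x \<noteq> codev ?A ?n d y"
    by (rule code_neq[OF sym]) (use not_reach[OF fp xy] in \<open>simp add: d_def\<close>)
  then have "?M d \<noteq> 0" using M[OF lev_in[OF xn xy(3)]] unfolding d_def by simp
  moreover have "?M c = 0" if "c < d" for c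
  proof (cases "c \<in> levels ?A ?n")
    case True
    have "reachv ?A ?n c x y" by (rule reach_edge) (use xn xy that d_def in auto)
    then have "codev ?A ?n c x = codev ?A ?n c y" by (rule code_eq[OF sym])
    then show ?thesis using M[OF True] by simp
  qed (rule M0)
  ultimately show ?thesis using hdeg_eq[of ?M d] unfolding hzero_def d_def by auto
qed

lemma deg_MM:
  assumes fp: "\<forall>i i' m m'. i < k \<longrightarrow> i' < k \<longrightarrow> m < l \<longrightarrow> m' < l \<longrightarrow> i \<noteq> i' \<longrightarrow> m \<noteq> m' \<longrightarrow>
      \<not> (C i m < C i m' \<and> C i m < C i' m \<and> C i m < C i' m')"
    and xy: "x < k + 1 + l" "y < k + 1 + l"
  shows "MM (block_matrix k C) (k + 1 + l) k x y \<noteq> hzero \<and> hdeg (MM (block_matrix k C) (k + 1 + l) k x y) = block_matrix k C x y"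
proof -
  consider "x \<le> k" "y \<le> k" | "k < x" "k < y" | "x \<le> k" "k < y" | "y \<le> k" "k < x" by linarith
  then show ?thesis
  proof cases
    case 1 then show ?thesis by (rule deg_low)
  next
    case 2 then show ?thesis by (rule deg_high)
  next
    case 3 then show ?thesis using deg_cross[OF fp 3 xy(2)] by simp
  next
    case 4 then show ?thesis using deg_cross[OF fp 4 xy(1)] MM_sym bm_sym by metis
  qed
qed

lemma upper:
  assumes fp: "\<forall>i i' m m'. i < k \<longrightarrow> i' < k \<longrightarrow> m < l \<longrightarrow> m' < l \<longrightarrow> i \<noteq> i' \<longrightarrow> m \<noteq> m' \<longrightarrow>
      \<not> (C i m < C i m' \<and> C i m < C i' m \<and> C i m < C i' m')"
  shows "sym_lift (block_matrix k C) (k + 1 + l) (MM (block_matrix k C) (k + 1 + l) k)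
    \<and> hrank_le (MM (block_matrix k C) (k + 1 + l) k) (k + 1 + l) 2"
proof
  show "sym_lift (block_matrix k C) (k + 1 + l) (MM (block_matrix k C) (k + 1 + l) k)"
    unfolding sym_lift_def using deg_MM[OF fp] hahn_MM MM_sym by blast
next
  let ?A = "block_matrix k C" and ?n = "k + 1 + l"
  define u where "u = (\<lambda>(i::nat) (s::nat). if s = 0 then hone else (\<lambda>c. sg k i * ser ?A ?n i c))"
  define v where "v = (\<lambda>(s::nat) (j::nat). if s = 0 then (\<lambda>c. sg k j * ser ?A ?n j c) else hone)"
  have h: "\<forall>i s. is_hahn (u i s) \<and> is_hahn (v s i)"
    unfolding u_def v_def using hahn_hone hahn_ser by simp
  have e: "\<forall>i<?n. \<forall>j<?n. MM ?A ?n k i j = (\<lambda>c. \<Sum>s<2. hmul (u i s) (v s j) c)"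
    unfolding u_def v_def MM_def by (simp add: numeral_2_eq_2 hmul_one_left hmul_one_right add.commute)
  show "hrank_le (MM ?A ?n k) ?n 2"
    unfolding hrank_le_def using h e by blast
qed

end



lemma pair_eq: "(min (a::nat) b, max a b) = (min c d, max c d) \<Longrightarrow> (a = c \<and> b = d) \<or> (a = d \<and> b = c)"
  by (auto simp: min_def max_def split: if_splits)

lemma lower:
  assumes IJ: "I \<subseteq> {..<n}" "J \<subseteq> {..<n}" "card I = 2" "card J = 2"
    and ns: "\<not> sym_trop_singular A I J"
    and lift: "sym_lift A n M" and rk: "hrank_le M n r"
  shows "2 \<le> r"
proof (rule ccontr)
  assume "\<not> 2 \<le> r"
  then have r: "r = 0 \<or> r = 1" by auto
  obtain i1 i2 where I: "I = {i1, i2}" "i1 \<noteq> i2" using IJ(3) by (metis card_2_iff)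
  obtain j1 j2 where J: "J = {j1, j2}" "j1 \<noteq> j2" using IJ(4) by (metis card_2_iff)
  obtain u v where uv: "\<forall>i s. is_hahn (u i s) \<and> is_hahn (v s i)"
    "\<forall>i<n. \<forall>j<n. M i j = (\<lambda>c. \<Sum>s<r. hmul (u i s) (v s j) c)"
    using rk unfolding hrank_le_def by blast
  have in1: "i1 < n" "j1 < n" using I(1) J(1) IJ(1,2) by auto
  have L: "\<forall>i<n. \<forall>j<n. is_hahn (M i j) \<and> M i j \<noteq> hzero \<and> hdeg (M i j) = A i j \<and> M i j = M j i"
    using lift unfolding sym_lift_def by blast
  show False
  proof (cases "r = 0")
    case True
    have "M i1 j1 = (\<lambda>c. \<Sum>s<r. hmul (u i1 s) (v s j1) c)" using uv(2) in1 by blast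
    then have "M i1 j1 = hzero" using True unfolding hzero_def by simp
    then show False using L in1 by blast
  next
    case False
    then have r1: "r = 1" using r by simp
    have Mp: "M x y = hmul (u x 0) (v 0 y)" if "x < n" "y < n" for x y
    proof -
      have "M x y = (\<lambda>c. \<Sum>s<r. hmul (u x s) (v s y) c)" using uv(2) that by blast
      then show ?thesis using r1 by simp
    qed
    have deg: "A x y = hdeg (u x 0) + hdeg (v 0 y)" if "x < n" "y < n" for x y
    proof -
      have Mx: "M x y \<noteq> hzero" "hdeg (M x y) = A x y" using L that by blast+
      then have nz: "hmul (u x 0) (v 0 y) \<noteq> hzero" using Mp[OF that] by simp
      have "u x 0 \<noteq> hzero"
      proof
        assume "u x 0 = hzero" then show False using nz by (simp add: hmul_zero_left)
      qed
      moreover have "v 0 y \<noteq> hzero"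
      proof
        assume "v 0 y = hzero" then show False using nz by (simp add: hmul_zero_right)
      qed
      ultimately have "hdeg (hmul (u x 0) (v 0 y)) = hdeg (u x 0) + hdeg (v 0 y)"
        using hmul_deg uv(1) by blast
      then show ?thesis using Mx Mp[OF that] by simp
    qed
    define du where "du x = hdeg (u x 0)" for x
    define dv where "dv y = hdeg (v 0 y)" for y
    have tv: "trop_val A I \<rho> = sum du I + sum dv J" if b: "bij_betw \<rho> I J" for \<rho>
    proof -
      have "trop_val A I \<rho> = (\<Sum>x\<in>I. du x + dv (\<rho> x))"
        unfolding trop_val_def du_def dv_def
      proof (rule sum.cong)
        fix x assume "x \<in> I"
        moreover then have "\<rho> x \<in> J" using b bij_betwE by blast
        ultimately have "x < n" "\<rho> x < n" using IJ(1,2) by auto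
        then show "A x (\<rho> x) = hdeg (u x 0) + hdeg (v 0 (\<rho> x))" by (rule deg)
      qed simp
      also have "\<dots> = sum du I + (\<Sum>x\<in>I. dv (\<rho> x))" by (simp add: sum.distrib)
      also have "(\<Sum>x\<in>I. dv (\<rho> x)) = sum dv J" by (rule sum.reindex_bij_betw[OF b])
      finally show ?thesis .
    qed
    define ra where "ra = (\<lambda>x::nat. if x = i1 then j1 else j2)"
    define rb where "rb = (\<lambda>x::nat. if x = i1 then j2 else j1)"
    have ba: "bij_betw ra I J" unfolding ra_def bij_betw_def inj_on_def using I J by auto
    have bb: "bij_betw rb I J" unfolding rb_def bij_betw_def inj_on_def using I J by auto
    have ma: "sym_monomial I ra = {#(min i1 j1, max i1 j1), (min i2 j2, max i2 j2)#}"
      unfolding sym_monomial_def ra_def using I by simp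
    have mb: "sym_monomial I rb = {#(min i1 j2, max i1 j2), (min i2 j1, max i2 j1)#}"
      unfolding sym_monomial_def rb_def using I by simp
    have "sym_monomial I ra \<noteq> sym_monomial I rb"
    proof
      assume eq: "sym_monomial I ra = sym_monomial I rb"
      have "(min i1 j1, max i1 j1) \<in># sym_monomial I ra" using ma by simp
      then have "(min i1 j1, max i1 j1) \<in># {#(min i1 j2, max i1 j2), (min i2 j1, max i2 j1)#}"
        using eq mb by simp
      then have "(min i1 j1, max i1 j1) = (min i1 j2, max i1 j2) \<or> (min i1 j1, max i1 j1) = (min i2 j1, max i2 j1)"
        by simp
      then show False using pair_eq[of i1 j1 i1 j2] pair_eq[of i1 j1 i2 j1] I J by auto
    qed
    then have "sym_trop_singular A I J"
      unfolding sym_trop_singular_def using ba bb tv by (intro exI[of _ ra] exI[of _ rb]) auto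
    then show False using ns by simp
  qed
qed



lemma mono_cong: "finite I \<Longrightarrow> (\<forall>x\<in>I. \<rho> x = \<rho>' x) \<Longrightarrow> sym_monomial I \<rho> = sym_monomial I \<rho>'"
  unfolding sym_monomial_def by (intro image_mset_cong) simp

lemma empty_nonsing: "\<not> sym_trop_singular A {} {}"
  unfolding sym_trop_singular_def sym_monomial_def by simp

lemma trop_set_finite:
  "finite {r. \<exists>I J. I \<subseteq> {..<n} \<and> J \<subseteq> {..<n} \<and> card I = r \<and> card J = r \<and> \<not> sym_trop_singular A I J}"
proof (rule finite_subset)
  show "{r. \<exists>I J. I \<subseteq> {..<n} \<and> J \<subseteq> {..<n} \<and> card I = r \<and> card J = r \<and> \<not> sym_trop_singular A I J} \<subseteq> {..n}"
  proof
    fix r assume "r \<in> {r. \<exists>I J. I \<subseteq> {..<n} \<and> J \<subseteq> {..<n} \<and> card I = r \<and> card J = r \<and> \<not> sym_trop_singular A I J}"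
    then obtain I where "I \<subseteq> {..<n}" "card I = r" by blast
    then have "r \<le> card {..<n}" by (metis card_mono finite_lessThan)
    then show "r \<in> {..n}" by simp
  qed
qed simp

context
  fixes k l :: nat and C :: "nat \<Rightarrow> nat \<Rightarrow> real"
  assumes nonneg: "\<forall>i<k. \<forall>j<l. C i j \<ge> 0"
begin

lemma nonsing3:
  assumes ii: "i < k" "i' < k" "i \<noteq> i'" and mm: "m < l" "m' < l" "m \<noteq> m'"
    and lt: "C i m < C i m'" "C i m < C i' m" "C i m < C i' m'"
  shows "\<not> sym_trop_singular (block_matrix k C) {i, i', k} {k + 1 + m, k + 1 + m', k}"
proof
  let ?A = "block_matrix k C"
  define a where "a = k + 1 + m"
  define b where "b = k + 1 + m'"
  define I where "I = {i, i', k}"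
  define J where "J = {a, b, k}"
  have nn: "0 \<le> C i m" "0 \<le> C i m'" "0 \<le> C i' m" "0 \<le> C i' m'" using nonneg ii mm by auto
  have vals: "?A i a = C i m" "?A i b = C i m'" "?A i' a = C i' m" "?A i' b = C i' m'"
    "?A i k = 0" "?A i' k = 0" "\<And>y. ?A k y = 0"
    unfolding a_def b_def using ii bm_cross[of _ k C] bm_low[of _ k k C] bm_kk[of k C] by auto
  have dist: "a \<noteq> b" "a \<noteq> k" "b \<noteq> k" "i \<noteq> k" "i' \<noteq> k" unfolding a_def b_def using mm ii by auto
  have tv: "trop_val ?A I \<rho> = ?A i (\<rho> i) + ?A i' (\<rho> i') + ?A k (\<rho> k)" for \<rho>
    unfolding trop_val_def I_def using dist ii by simp
  have key: "\<rho> i = a \<and> \<rho> i' = k \<and> \<rho> k = b" if bj: "bij_betw \<rho> I J" and le: "trop_val ?A I \<rho> \<le> C i m" for \<rho>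
  proof -
    have r: "\<rho> i \<in> J" "\<rho> i' \<in> J" "\<rho> k \<in> J" using bj unfolding I_def by (auto dest: bij_betwE)
    have inj: "inj_on \<rho> I" using bj by (rule bij_betw_imp_inj_on)
    have d: "\<rho> i \<noteq> \<rho> i'" "\<rho> i \<noteq> \<rho> k" "\<rho> i' \<noteq> \<rho> k"
      using inj dist ii unfolding I_def inj_on_def by auto
    have le': "?A i (\<rho> i) + ?A i' (\<rho> i') \<le> C i m" using le tv vals(7) by simp
    show ?thesis
      using r d le' vals nn lt dist unfolding J_def by auto
  qed
  define \<rho>0 where "\<rho>0 = (\<lambda>x. if x = i then a else if x = i' then k else b)"
  have b0: "bij_betw \<rho>0 I J" unfolding \<rho>0_def I_def J_def bij_betw_def inj_on_def using dist ii by auto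
  have t0: "trop_val ?A I \<rho>0 = C i m" unfolding tv \<rho>0_def using ii dist vals by simp
  have same: "sym_monomial I \<rho> = sym_monomial I \<rho>0" if "bij_betw \<rho> I J" "trop_val ?A I \<rho> \<le> C i m" for \<rho>
    using key[OF that] unfolding I_def \<rho>0_def using ii dist by (intro mono_cong) auto
  assume "sym_trop_singular ?A {i, i', k} {k + 1 + m, k + 1 + m', k}"
  then obtain \<rho>1 \<rho>2 where h: "bij_betw \<rho>1 I J" "bij_betw \<rho>2 I J" "sym_monomial I \<rho>1 \<noteq> sym_monomial I \<rho>2"
    "\<forall>\<rho>. bij_betw \<rho> I J \<longrightarrow> trop_val ?A I \<rho>1 \<le> trop_val ?A I \<rho> \<and> trop_val ?A I \<rho>2 \<le> trop_val ?A I \<rho>"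
    unfolding sym_trop_singular_def I_def J_def a_def b_def by blast
  have "trop_val ?A I \<rho>1 \<le> C i m" "trop_val ?A I \<rho>2 \<le> C i m" using h(4) b0 t0 by auto
  then show False using same h(1-3) by metis
qed

lemma fp_from_rank:
  assumes rk: "sym_trop_rank (block_matrix k C) (k + 1 + l) = 2"
  shows "\<forall>i i' m m'. i < k \<longrightarrow> i' < k \<longrightarrow> m < l \<longrightarrow> m' < l \<longrightarrow> i \<noteq> i' \<longrightarrow> m \<noteq> m' \<longrightarrow>
      \<not> (C i m < C i m' \<and> C i m < C i' m \<and> C i m < C i' m')"
proof (intro allI impI notI)
  fix i i' m m'
  assume h: "i < k" "i' < k" "m < l" "m' < l" "i \<noteq> i'" "m \<noteq> m'"
    and lt: "C i m < C i m' \<and> C i m < C i' m \<and> C i m < C i' m'"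
  let ?S = "{r. \<exists>I J. I \<subseteq> {..<k + 1 + l} \<and> J \<subseteq> {..<k + 1 + l} \<and> card I = r \<and> card J = r \<and>
      \<not> sym_trop_singular (block_matrix k C) I J}"
  have fin: "finite ?S" by (rule trop_set_finite)
  have ns: "\<not> sym_trop_singular (block_matrix k C) {i, i', k} {k + 1 + m, k + 1 + m', k}"
    using nonsing3[OF h(1,2,5) h(3,4,6)] lt by blast
  have "card {i, i', k} = 3" using h by simp
  moreover have "card {k + 1 + m, k + 1 + m', k} = 3" using h by simp
  moreover have "{i, i', k} \<subseteq> {..<k + 1 + l}" "{k + 1 + m, k + 1 + m', k} \<subseteq> {..<k + 1 + l}" using h by auto
  ultimately have "3 \<in> ?S" using ns by blast
  then have "3 \<le> Max ?S" using fin by (simp add: Max_ge)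
  then show False using rk unfolding sym_trop_rank_def by simp
qed

end


theorem lemma1:
  fixes k l :: nat and C :: "nat \<Rightarrow> nat \<Rightarrow> real"
  assumes "\<forall>i<k. \<forall>j<l. C i j \<ge> 0"
    and "\<forall>j<l. \<exists>i<k. C i j \<noteq> 0"
    and "sym_trop_rank (block_matrix k C) (k + 1 + l) = 2"
  shows "sym_kapranov_rank (block_matrix k C) (k + 1 + l) = 2"
proof -
  let ?A = "block_matrix k C" and ?n = "k + 1 + l"
  let ?S = "{r. \<exists>I J. I \<subseteq> {..<?n} \<and> J \<subseteq> {..<?n} \<and> card I = r \<and> card J = r \<and>
      \<not> sym_trop_singular ?A I J}"
  have fp: "\<forall>i i' m m'. i < k \<longrightarrow> i' < k \<longrightarrow> m < l \<longrightarrow> m' < l \<longrightarrow> i \<noteq> i' \<longrightarrow> m \<noteq> m' \<longrightarrow>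
      \<not> (C i m < C i m' \<and> C i m < C i' m \<and> C i m < C i' m')"
    by (rule fp_from_rank[OF assms(1) assms(3)])
  have fin: "finite ?S" by (rule trop_set_finite)
  have "0 \<in> ?S" using empty_nonsing by fastforce
  then have ne: "?S \<noteq> {}" by blast
  have "Max ?S \<in> ?S" using fin ne by (rule Max_in)
  then have "2 \<in> ?S" using assms(3) unfolding sym_trop_rank_def by simp
  then obtain I J where IJ: "I \<subseteq> {..<?n}" "J \<subseteq> {..<?n}" "card I = 2" "card J = 2"
    "\<not> sym_trop_singular ?A I J" by blast
  show ?thesis
    unfolding sym_kapranov_rank_def
  proof (rule Least_equality)
    show "\<exists>M. sym_lift ?A ?n M \<and> hrank_le M ?n 2" using upper[OF assms(1) fp] by blast
  next
    fix y assume "\<exists>M. sym_lift ?A ?n M \<and> hrank_le M ?n y"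
    then obtain M where "sym_lift ?A ?n M" "hrank_le M ?n y" by blast
    then show "2 \<le> y" using lower[OF IJ] by blast
  qed
qed

end
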